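(* In the setting described in the context, for every $t\ge0$ the long exponential rate satisfies $R_{t\infty}\ge0$.
   Context: Let $(\Omega,\mathcal F,\mathbb P)$ be a probability space with a filtration $\{\mathcal F_t\}_{t\ge0}$ satisfying the usual conditions; (in)equalities between random variables hold a.s. A pricing kernel is an $\{\mathcal F_t\}$-adapted càdlàg semimartingale $\{\pi_t\}_{t\ge0}$ with (a) $\pi_t>0$ for all $t\ge0$, (b) $\mathbb E[\pi_t]<\infty$ for all $t\ge0$, (c) $\liminf_{t\to\infty}\mathbb E[\pi_t]=0$. Fix such a pricing kernel. The discount bond price is $P_{tT}=\pi_t^{-1}\mathbb E[\pi_T\mid\mathcal F_t]$ for $0\le t<T$. The exponential rate is $R_{tT}=-(T-t)^{-1}\ln P_{tT}$. For a family $\{A_x\}_{x\in\mathbb R^+}$ of $\mathcal F_t$-measurable extended-real random variables, $\limsup_{x\to\infty}A_x:=\operatorname{ess\,inf}_{x}\operatorname{ess\,sup}_{y\ge x}A_y$ and $\liminf_{x\to\infty}A_x:=\operatorname{ess\,sup}_{x}\operatorname{ess\,inf}_{y\ge x}A_y$, where essential supremum/infimum are taken among $\mathcal F_t$-measurable random variables (the essential supremum of a family being the a.s.-smallest random variable dominating every member a.s.). The long exponential rate is $R_{t\infty}=\limsup_{T\to\infty}R_{tT}$. *)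

theory Defs
  imports "HOL-Probability.Probability"
begin

(* Time index: nonnegative reals, represented as real with explicit guards t >= 0. *)

definition usual_filtration :: "'a measure \<Rightarrow> (real \<Rightarrow> 'a measure) \<Rightarrow> bool" where
  "usual_filtration M F \<longleftrightarrow>
     (\<forall>t\<ge>0. subalgebra M (F t)) \<and>
     (\<forall>s t. 0 \<le> s \<and> s \<le> t \<longrightarrow> sets (F s) \<subseteq> sets (F t)) \<and>
     complete_measure M \<and>
     null_sets M \<subseteq> sets (F 0) \<and>
     (\<forall>t\<ge>0. sets (F t) = (\<Inter>s\<in>{t<..}. sets (F s)))"

definition adapted :: "(real \<Rightarrow> 'a measure) \<Rightarrow> (real \<Rightarrow> 'a \<Rightarrow> real) \<Rightarrow> bool" where
  "adapted F X \<longleftrightarrow> (\<forall>t\<ge>0. X t \<in> borel_measurable (F t))"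

definition cadlag :: "'a measure \<Rightarrow> (real \<Rightarrow> 'a \<Rightarrow> real) \<Rightarrow> bool" where
  "cadlag M X \<longleftrightarrow> (\<forall>\<omega>\<in>space M.
     (\<forall>t\<ge>0. continuous (at_right t) (\<lambda>s. X s \<omega>)) \<and>
     (\<forall>t>0. \<exists>l. ((\<lambda>s. X s \<omega>) \<longlongrightarrow> l) (at_left t)))"

definition martingale :: "'a measure \<Rightarrow> (real \<Rightarrow> 'a measure) \<Rightarrow> (real \<Rightarrow> 'a \<Rightarrow> real) \<Rightarrow> bool" where
  "martingale M F X \<longleftrightarrow> adapted F X \<and> (\<forall>t\<ge>0. integrable M (X t)) \<and>
     (\<forall>s t. 0 \<le> s \<and> s \<le> t \<longrightarrow> (AE \<omega> in M. real_cond_exp M (F s) (X t) \<omega> = X s \<omega>))"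

definition stopping_time_pos :: "'a measure \<Rightarrow> (real \<Rightarrow> 'a measure) \<Rightarrow> ('a \<Rightarrow> ereal) \<Rightarrow> bool" where
  "stopping_time_pos M F \<tau> \<longleftrightarrow> (\<forall>\<omega>\<in>space M. 0 \<le> \<tau> \<omega>) \<and>
     (\<forall>t\<ge>0. {\<omega>\<in>space M. \<tau> \<omega> \<le> ereal t} \<in> sets (F t))"

definition stopped :: "(real \<Rightarrow> 'a \<Rightarrow> real) \<Rightarrow> ('a \<Rightarrow> ereal) \<Rightarrow> real \<Rightarrow> 'a \<Rightarrow> real" where
  "stopped X \<tau> t \<omega> = X (real_of_ereal (min (ereal t) (\<tau> \<omega>))) \<omega>"

definition local_martingale :: "'a measure \<Rightarrow> (real \<Rightarrow> 'a measure) \<Rightarrow> (real \<Rightarrow> 'a \<Rightarrow> real) \<Rightarrow> bool" where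
  "local_martingale M F X \<longleftrightarrow> adapted F X \<and>
     (\<exists>\<tau> :: nat \<Rightarrow> 'a \<Rightarrow> ereal.
        (\<forall>n. stopping_time_pos M F (\<tau> n)) \<and>
        (\<forall>n. \<forall>\<omega>\<in>space M. \<tau> n \<omega> \<le> \<tau> (Suc n) \<omega>) \<and>
        (AE \<omega> in M. (\<lambda>n. \<tau> n \<omega>) \<longlonglongrightarrow> \<infinity>) \<and>
        (\<forall>n. martingale M F (stopped X (\<tau> n))))"

definition finite_variation_on :: "(real \<Rightarrow> real) \<Rightarrow> real \<Rightarrow> real \<Rightarrow> bool" where
  "finite_variation_on f a b \<longleftrightarrow> (\<exists>B. \<forall>xs. sorted xs \<and> set xs \<subseteq> {a..b} \<longrightarrow>
     (\<Sum>i<length xs - 1. \<bar>f (xs ! Suc i) - f (xs ! i)\<bar>) \<le> B)"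

definition semimartingale :: "'a measure \<Rightarrow> (real \<Rightarrow> 'a measure) \<Rightarrow> (real \<Rightarrow> 'a \<Rightarrow> real) \<Rightarrow> bool" where
  "semimartingale M F X \<longleftrightarrow> adapted F X \<and> cadlag M X \<and>
     (\<exists>N A. local_martingale M F N \<and> cadlag M N \<and> (\<forall>\<omega>\<in>space M. N 0 \<omega> = 0) \<and>
        adapted F A \<and> cadlag M A \<and> (\<forall>\<omega>\<in>space M. A 0 \<omega> = 0) \<and>
        (\<forall>\<omega>\<in>space M. \<forall>t\<ge>0. finite_variation_on (\<lambda>s. A s \<omega>) 0 t) \<and>
        (AE \<omega> in M. \<forall>t\<ge>0. X t \<omega> = X 0 \<omega> + N t \<omega> + A t \<omega>))"

definition pricing_kernel :: "'a measure \<Rightarrow> (real \<Rightarrow> 'a measure) \<Rightarrow> (real \<Rightarrow> 'a \<Rightarrow> real) \<Rightarrow> bool" where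
  "pricing_kernel M F \<pi> \<longleftrightarrow> semimartingale M F \<pi> \<and>
     (\<forall>t\<ge>0. AE \<omega> in M. 0 < \<pi> t \<omega>) \<and>
     (\<forall>t\<ge>0. integrable M (\<pi> t)) \<and>
     Liminf at_top (\<lambda>t. ereal (integral\<^sup>L M (\<pi> t))) = 0"

definition is_ess_sup :: "'a measure \<Rightarrow> 'a measure \<Rightarrow> ('i \<Rightarrow> 'a \<Rightarrow> ereal) \<Rightarrow> 'i set \<Rightarrow> ('a \<Rightarrow> ereal) \<Rightarrow> bool" where
  "is_ess_sup M G A I Z \<longleftrightarrow> Z \<in> borel_measurable G \<and>
     (\<forall>x\<in>I. AE \<omega> in M. A x \<omega> \<le> Z \<omega>) \<and>
     (\<forall>W \<in> borel_measurable G. (\<forall>x\<in>I. AE \<omega> in M. A x \<omega> \<le> W \<omega>) \<longrightarrow> (AE \<omega> in M. Z \<omega> \<le> W \<omega>))"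

definition is_ess_inf :: "'a measure \<Rightarrow> 'a measure \<Rightarrow> ('i \<Rightarrow> 'a \<Rightarrow> ereal) \<Rightarrow> 'i set \<Rightarrow> ('a \<Rightarrow> ereal) \<Rightarrow> bool" where
  "is_ess_inf M G A I Z \<longleftrightarrow> Z \<in> borel_measurable G \<and>
     (\<forall>x\<in>I. AE \<omega> in M. Z \<omega> \<le> A x \<omega>) \<and>
     (\<forall>W \<in> borel_measurable G. (\<forall>x\<in>I. AE \<omega> in M. W \<omega> \<le> A x \<omega>) \<longrightarrow> (AE \<omega> in M. W \<omega> \<le> Z \<omega>))"

definition ess_sup_G :: "'a measure \<Rightarrow> 'a measure \<Rightarrow> ('i \<Rightarrow> 'a \<Rightarrow> ereal) \<Rightarrow> 'i set \<Rightarrow> 'a \<Rightarrow> ereal" where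
  "ess_sup_G M G A I = (SOME Z. is_ess_sup M G A I Z)"

definition ess_inf_G :: "'a measure \<Rightarrow> 'a measure \<Rightarrow> ('i \<Rightarrow> 'a \<Rightarrow> ereal) \<Rightarrow> 'i set \<Rightarrow> 'a \<Rightarrow> ereal" where
  "ess_inf_G M G A I = (SOME Z. is_ess_inf M G A I Z)"

definition ess_limsup :: "'a measure \<Rightarrow> 'a measure \<Rightarrow> (real \<Rightarrow> 'a \<Rightarrow> ereal) \<Rightarrow> real set \<Rightarrow> 'a \<Rightarrow> ereal" where
  "ess_limsup M G A I = ess_inf_G M G (\<lambda>x. ess_sup_G M G A {y\<in>I. x \<le> y}) I"

definition bond_price :: "'a measure \<Rightarrow> (real \<Rightarrow> 'a measure) \<Rightarrow> (real \<Rightarrow> 'a \<Rightarrow> real) \<Rightarrow> real \<Rightarrow> real \<Rightarrow> 'a \<Rightarrow> real" where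
  "bond_price M F \<pi> t T \<omega> = real_cond_exp M (F t) (\<pi> T) \<omega> / \<pi> t \<omega>"

definition exp_rate :: "'a measure \<Rightarrow> (real \<Rightarrow> 'a measure) \<Rightarrow> (real \<Rightarrow> 'a \<Rightarrow> real) \<Rightarrow> real \<Rightarrow> real \<Rightarrow> 'a \<Rightarrow> ereal" where
  "exp_rate M F \<pi> t T \<omega> = ereal (- ln (bond_price M F \<pi> t T \<omega>) / (T - t))"

definition long_rate :: "'a measure \<Rightarrow> (real \<Rightarrow> 'a measure) \<Rightarrow> (real \<Rightarrow> 'a \<Rightarrow> real) \<Rightarrow> real \<Rightarrow> 'a \<Rightarrow> ereal" where
  "long_rate M F \<pi> t = ess_limsup M (F t) (exp_rate M F \<pi> t) {t<..}"

end

theory Submission imports Defs begin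

definition hh :: "ereal \<Rightarrow> real" where
  "hh x = (if x = \<infinity> then 2 else if x = -\<infinity> then -2 else arctan (real_of_ereal x))"

lemma hh_strict: "a < b \<Longrightarrow> hh a < hh b"
proof -
  assume ab: "a < b"
  have u: "arctan y < 2" for y using arctan_ubound[of y] pi_less_4 by linarith
  have l: "-2 < arctan y" for y using arctan_lbound[of y] pi_less_4 by linarith
  show ?thesis using ab
    by (cases a; cases b) (auto simp: hh_def u l arctan_less_iff)
qed

lemma hh_mono: assumes "a \<le> b" shows "hh a \<le> hh b"
proof (cases "a = b")
  case True then show ?thesis by simp
next
  case False with assms have "a < b" by simp
  then show ?thesis using hh_strict[of a b] by simp
qed

lemma hh_bound: "\<bar>hh a\<bar> \<le> 2"
proof -
  have u: "arctan y < 2" for y using arctan_ubound[of y] pi_less_4 by linarith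
  have l: "-2 < arctan y" for y using arctan_lbound[of y] pi_less_4 by linarith
  show ?thesis using u[of "real_of_ereal a"] l[of "real_of_ereal a"] by (auto simp: hh_def abs_le_iff less_imp_le)
qed

lemma hh_measurable[measurable]: "hh \<in> borel_measurable borel"
  unfolding hh_def by measurable

lemma ess_sup_exists:
  fixes A :: "'i \<Rightarrow> 'a \<Rightarrow> ereal"
  assumes P: "prob_space M" and S: "subalgebra M G"
    and meas: "\<And>x. x \<in> I \<Longrightarrow> A x \<in> borel_measurable G"
  shows "\<exists>Z. is_ess_sup M G A I Z"
proof -
  interpret prob_space M by (rule P)
  have measM: "A x \<in> borel_measurable M" if "x \<in> I" for x
    using measurable_from_subalg[OF S meas[OF that]] .
  define \<Phi> where "\<Phi> C = (\<integral>\<omega>. hh (SUP c\<in>C. A c \<omega>) \<partial>M)" for C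
  define CC where "CC = {C. countable C \<and> C \<subseteq> I}"
  have supG: "(\<lambda>\<omega>. SUP c\<in>C. A c \<omega>) \<in> borel_measurable G" if "C \<in> CC" for C
    using that meas unfolding CC_def by (intro borel_measurable_SUP) auto
  have supM: "(\<lambda>\<omega>. SUP c\<in>C. A c \<omega>) \<in> borel_measurable M" if "C \<in> CC" for C
    using measurable_from_subalg[OF S supG[OF that]] .
  have intg: "integrable M (\<lambda>\<omega>. hh (SUP c\<in>C. A c \<omega>))" if "C \<in> CC" for C
    by (rule integrable_const_bound[where B=2]) (use hh_bound supM[OF that] in auto)
  have bnd: "\<Phi> C \<le> 2" if "C \<in> CC" for C
    unfolding \<Phi>_def using intg[OF that] hh_bound
    by (intro integral_le_const) (auto simp: abs_le_iff)
  have mono: "\<Phi> C \<le> \<Phi> D" if "C \<subseteq> D" "D \<in> CC" for C D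
  proof -
    have "C \<in> CC" using that unfolding CC_def by (auto intro: countable_subset)
    then show ?thesis unfolding \<Phi>_def using that
      by (intro integral_mono intg hh_mono SUP_subset_mono) (auto simp del: SUP_le_iff)
  qed
  define s where "s = Sup (\<Phi> ` CC)"
  have ne: "\<Phi> ` CC \<noteq> {}" unfolding CC_def by auto
  have bdd: "bdd_above (\<Phi> ` CC)" using bnd by (intro bdd_aboveI[where M=2]) auto
  have les: "\<Phi> C \<le> s" if "C \<in> CC" for C
    unfolding s_def using bdd that by (intro cSup_upper) auto
  have "\<exists>C\<in>CC. s - 1 / real (Suc n) < \<Phi> C" for n
  proof -
    have "s - 1 / real (Suc n) < s" by simp
    then show ?thesis unfolding s_def using less_cSup_iff[OF ne bdd] by auto
  qed
  then obtain Cn where Cn: "\<And>n. Cn n \<in> CC" "\<And>n. s - 1 / real (Suc n) < \<Phi> (Cn n)"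
    by metis
  define Cs where "Cs = (\<Union>n. Cn n)"
  have Cs: "Cs \<in> CC" using Cn(1) unfolding CC_def Cs_def by auto
  have "s - 1 / real (Suc n) < \<Phi> Cs" for n
  proof -
    have "Cn n \<subseteq> Cs" unfolding Cs_def by auto
    then show ?thesis using Cn(2)[of n] mono[of "Cn n" Cs] Cs by linarith
  qed
  then have sCs: "\<Phi> Cs = s"
  proof -
    assume h: "\<And>n. s - 1 / real (Suc n) < \<Phi> Cs"
    show ?thesis
    proof (rule ccontr)
      assume "\<Phi> Cs \<noteq> s"
      with les[OF Cs] have "0 < s - \<Phi> Cs" by simp
      then obtain n where "1 / real (Suc n) < s - \<Phi> Cs"
        using reals_Archimedean[of "s - \<Phi> Cs"] by (auto simp: inverse_eq_divide)
      with h[of n] show False by simp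
    qed
  qed
  define Z where "Z = (\<lambda>\<omega>. SUP c\<in>Cs. A c \<omega>)"
  have "is_ess_sup M G A I Z"
    unfolding is_ess_sup_def
  proof (intro conjI ballI impI)
    show "Z \<in> borel_measurable G" unfolding Z_def by (rule supG[OF Cs])
  next
    fix x assume x: "x \<in> I"
    define D where "D = insert x Cs"
    have D: "D \<in> CC" using Cs x unfolding D_def CC_def by auto
    have "Cs \<subseteq> D" unfolding D_def by auto
    then have "\<Phi> Cs \<le> \<Phi> D" using mono D by blast
    then have "\<Phi> D = \<Phi> Cs" using les[OF D] sCs by linarith
    have intd: "integrable M (\<lambda>\<omega>. hh (SUP c\<in>D. A c \<omega>) - hh (Z \<omega>))"
      unfolding Z_def using intg[OF D] intg[OF Cs] by (rule Bochner_Integration.integrable_diff)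
    have eq0: "(\<integral>\<omega>. hh (SUP c\<in>D. A c \<omega>) - hh (Z \<omega>) \<partial>M) = 0"
      using \<open>\<Phi> D = \<Phi> Cs\<close> unfolding \<Phi>_def Z_def
      using Bochner_Integration.integral_diff[OF intg[OF D] intg[OF Cs]] by simp
    have leZ: "Z \<omega> \<le> (SUP c\<in>D. A c \<omega>)" for \<omega>
      unfolding Z_def D_def by (rule SUP_subset_mono) auto
    have nn0: "AE \<omega> in M. 0 \<le> hh (SUP c\<in>D. A c \<omega>) - hh (Z \<omega>)"
      by (intro AE_I2) (use hh_mono[OF leZ] in simp)
    have "AE \<omega> in M. hh (SUP c\<in>D. A c \<omega>) - hh (Z \<omega>) = 0"
      using integral_nonneg_eq_0_iff_AE[OF intd nn0] eq0 by blast
    then show "AE \<omega> in M. A x \<omega> \<le> Z \<omega>"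
    proof (rule AE_mp, intro AE_I2 impI)
      fix \<omega> assume e: "hh (SUP c\<in>D. A c \<omega>) - hh (Z \<omega>) = 0"
      have "Z \<omega> \<le> (SUP c\<in>D. A c \<omega>)" by (rule leZ)
      moreover have "\<not> Z \<omega> < (SUP c\<in>D. A c \<omega>)" using hh_strict[of "Z \<omega>" "(SUP c\<in>D. A c \<omega>)"] e by linarith
      ultimately have "Z \<omega> = (SUP c\<in>D. A c \<omega>)" by auto
      moreover have "A x \<omega> \<le> (SUP c\<in>D. A c \<omega>)" unfolding D_def by (rule SUP_upper) simp
      ultimately show "A x \<omega> \<le> Z \<omega>" by simp
    qed
  next
    fix W :: "'a \<Rightarrow> ereal"
    assume "W \<in> borel_measurable G" and up: "\<forall>x\<in>I. AE \<omega> in M. A x \<omega> \<le> W \<omega>"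
    have "countable Cs" "Cs \<subseteq> I" using Cs unfolding CC_def by auto
    then have "AE \<omega> in M. \<forall>c\<in>Cs. A c \<omega> \<le> W \<omega>"
      unfolding AE_ball_countable[OF \<open>countable Cs\<close>] using up \<open>Cs \<subseteq> I\<close> by blast
    then show "AE \<omega> in M. Z \<omega> \<le> W \<omega>"
      by eventually_elim (simp add: Z_def SUP_le_iff)
  qed
  then show ?thesis by blast
qed

lemma is_ess_supD:
  assumes "is_ess_sup M G A I Z"
  shows "Z \<in> borel_measurable G"
    and "x \<in> I \<Longrightarrow> AE \<omega> in M. A x \<omega> \<le> Z \<omega>"
    and "W \<in> borel_measurable G \<Longrightarrow> (\<forall>x\<in>I. AE \<omega> in M. A x \<omega> \<le> W \<omega>) \<Longrightarrow> AE \<omega> in M. Z \<omega> \<le> W \<omega>"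
proof -
  have h: "Z \<in> borel_measurable G \<and> (\<forall>x\<in>I. AE \<omega> in M. A x \<omega> \<le> Z \<omega>) \<and>
     (\<forall>W \<in> borel_measurable G. (\<forall>x\<in>I. AE \<omega> in M. A x \<omega> \<le> W \<omega>) \<longrightarrow> (AE \<omega> in M. Z \<omega> \<le> W \<omega>))"
    using assms unfolding is_ess_sup_def .
  show "Z \<in> borel_measurable G" using h by (rule conjunct1)
  show "x \<in> I \<Longrightarrow> AE \<omega> in M. A x \<omega> \<le> Z \<omega>" using h by blast
  show "W \<in> borel_measurable G \<Longrightarrow> (\<forall>x\<in>I. AE \<omega> in M. A x \<omega> \<le> W \<omega>) \<Longrightarrow> AE \<omega> in M. Z \<omega> \<le> W \<omega>"
    using h by blast
qed

lemma is_ess_infD: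
  assumes "is_ess_inf M G A I Z"
  shows "Z \<in> borel_measurable G"
    and "x \<in> I \<Longrightarrow> AE \<omega> in M. Z \<omega> \<le> A x \<omega>"
    and "W \<in> borel_measurable G \<Longrightarrow> (\<forall>x\<in>I. AE \<omega> in M. W \<omega> \<le> A x \<omega>) \<Longrightarrow> AE \<omega> in M. W \<omega> \<le> Z \<omega>"
proof -
  have h: "Z \<in> borel_measurable G \<and> (\<forall>x\<in>I. AE \<omega> in M. Z \<omega> \<le> A x \<omega>) \<and>
     (\<forall>W \<in> borel_measurable G. (\<forall>x\<in>I. AE \<omega> in M. W \<omega> \<le> A x \<omega>) \<longrightarrow> (AE \<omega> in M. W \<omega> \<le> Z \<omega>))"
    using assms unfolding is_ess_inf_def .
  show "Z \<in> borel_measurable G" using h by (rule conjunct1)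
  show "x \<in> I \<Longrightarrow> AE \<omega> in M. Z \<omega> \<le> A x \<omega>" using h by blast
  show "W \<in> borel_measurable G \<Longrightarrow> (\<forall>x\<in>I. AE \<omega> in M. W \<omega> \<le> A x \<omega>) \<Longrightarrow> AE \<omega> in M. W \<omega> \<le> Z \<omega>"
    using h by blast
qed

lemma ess_inf_exists:
  fixes A :: "'i \<Rightarrow> 'a \<Rightarrow> ereal"
  assumes P: "prob_space M" and S: "subalgebra M G"
    and meas: "\<And>x. x \<in> I \<Longrightarrow> A x \<in> borel_measurable G"
  shows "\<exists>Z. is_ess_inf M G A I Z"
proof -
  have measn: "\<And>x. x \<in> I \<Longrightarrow> (\<lambda>\<omega>. - A x \<omega>) \<in> borel_measurable G"
    using meas by (simp only: borel_measurable_uminus_eq_ereal)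
  have "\<exists>Z. is_ess_sup M G (\<lambda>x \<omega>. - A x \<omega>) I Z"
    by (rule ess_sup_exists[OF P S]) (rule measn)
  then obtain Z where Z: "is_ess_sup M G (\<lambda>x \<omega>. - A x \<omega>) I Z" by (elim exE)
  note Zm = is_ess_supD(1)[OF Z]
  note Zu = is_ess_supD(2)[OF Z]
  note Zl = is_ess_supD(3)[OF Z]
  have "is_ess_inf M G A I (\<lambda>\<omega>. - Z \<omega>)"
    unfolding is_ess_inf_def
  proof (intro conjI ballI impI)
    show "(\<lambda>\<omega>. - Z \<omega>) \<in> borel_measurable G" using Zm by (simp only: borel_measurable_uminus_eq_ereal)
  next
    fix x assume "x \<in> I"
    then have "AE \<omega> in M. - A x \<omega> \<le> Z \<omega>" by (rule Zu)
    then show "AE \<omega> in M. - Z \<omega> \<le> A x \<omega>"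
    proof eventually_elim
      case (elim \<omega>)
      then show ?case by (subst ereal_uminus_le_reorder) simp
    qed
  next
    fix W :: "'a \<Rightarrow> ereal"
    assume Wm: "W \<in> borel_measurable G" and lo: "\<forall>x\<in>I. AE \<omega> in M. W \<omega> \<le> A x \<omega>"
    have Wm': "(\<lambda>\<omega>. - W \<omega>) \<in> borel_measurable G" using Wm by (simp only: borel_measurable_uminus_eq_ereal)
    have "\<forall>x\<in>I. AE \<omega> in M. - A x \<omega> \<le> - W \<omega>"
    proof
      fix x assume "x \<in> I"
      with lo have "AE \<omega> in M. W \<omega> \<le> A x \<omega>" by blast
      then show "AE \<omega> in M. - A x \<omega> \<le> - W \<omega>"
      proof eventually_elim
        case (elim \<omega>)
        then show ?case by (simp only: ereal_minus_le_minus)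
      qed
    qed
    then have "AE \<omega> in M. Z \<omega> \<le> - W \<omega>" using Zl[OF Wm'] by blast
    then show "AE \<omega> in M. W \<omega> \<le> - Z \<omega>"
    proof eventually_elim
      case (elim \<omega>)
      then have "- (- W \<omega>) \<le> - Z \<omega>" by (simp only: ereal_minus_le_minus)
      then show ?case by (simp only: ereal_uminus_uminus)
    qed
  qed
  then show ?thesis by blast
qed


theorem proposition1:
  fixes M :: "'a measure" and F :: "real \<Rightarrow> 'a measure" and \<pi> :: "real \<Rightarrow> 'a \<Rightarrow> real"
  assumes "prob_space M"
    and "usual_filtration M F"
    and "pricing_kernel M F \<pi>"
    and "0 \<le> t"
  shows "AE \<omega> in M. 0 \<le> long_rate M F \<pi> t \<omega>"
proof -
  interpret prob_space M by fact
  have t0: "0 \<le> t" by fact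
  have S: "subalgebra M (F t)" using assms(2,4) unfolding usual_filtration_def by auto
  have fms: "finite_measure_subalgebra M (F t)"
    unfolding finite_measure_subalgebra_def finite_measure_subalgebra_axioms_def
    using S finite_measure_axioms by auto
  interpret cs: sigma_finite_subalgebra M "F t"
    by (rule finite_measure_subalgebra_is_sigma_finite[OF fms])
  have sm: "semimartingale M F \<pi>" and pos: "\<And>s. 0 \<le> s \<Longrightarrow> AE \<omega> in M. 0 < \<pi> s \<omega>"
    and intg: "\<And>s. 0 \<le> s \<Longrightarrow> integrable M (\<pi> s)"
    and lim: "Liminf at_top (\<lambda>s. ereal (integral\<^sup>L M (\<pi> s))) = 0"
    using assms(3) unfolding pricing_kernel_def by auto
  have adapt: "\<pi> t \<in> borel_measurable (F t)"
    using sm t0 unfolding semimartingale_def adapted_def by auto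
  have small: "\<exists>T\<ge>x. (\<integral>\<omega>. \<pi> T \<omega> \<partial>M) < e" if e: "0 < e" for x e :: real
  proof (rule ccontr)
    assume "\<not> ?thesis"
    then have "\<forall>T\<ge>x. e \<le> (\<integral>\<omega>. \<pi> T \<omega> \<partial>M)" by (auto simp: not_less)
    then have "eventually (\<lambda>T. ereal e \<le> ereal (\<integral>\<omega>. \<pi> T \<omega> \<partial>M)) at_top"
      by (auto simp: eventually_at_top_linorder)
    then have "ereal e \<le> Liminf at_top (\<lambda>s. ereal (integral\<^sup>L M (\<pi> s)))"
      by (rule Liminf_bounded)
    with lim e show False by simp
  qed
  have "\<forall>n::nat. \<exists>T. T \<ge> t + 1 + real n \<and> (\<integral>\<omega>. \<pi> T \<omega> \<partial>M) < (1/2)^n"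
  proof
    fix n :: nat
    have "(0::real) < (1/2)^n" by simp
    from small[OF this, of "t + 1 + real n"] show "\<exists>T. T \<ge> t + 1 + real n \<and> (\<integral>\<omega>. \<pi> T \<omega> \<partial>M) < (1/2)^n"
      by blast
  qed
  then obtain T where T: "\<And>n. T n \<ge> t + 1 + real n" "\<And>n. (\<integral>\<omega>. \<pi> (T n) \<omega> \<partial>M) < (1/2)^n"
    by metis
  have T0: "0 \<le> T n" "t < T n" for n using T(1)[of n] t0 by auto
  define c where "c n = real_cond_exp M (F t) (\<pi> (T n))" for n
  have cpos: "AE \<omega> in M. 0 < c n \<omega>" for n
    unfolding c_def by (rule cs.real_cond_exp_gr_c[OF intg pos]) (use T0 in auto)
  have cint: "integrable M (c n)" "(\<integral>\<omega>. c n \<omega> \<partial>M) = (\<integral>\<omega>. \<pi> (T n) \<omega> \<partial>M)" for n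
    unfolding c_def using cs.real_cond_exp_int[OF intg[OF T0(1)]] by auto
  have cM[measurable]: "c n \<in> borel_measurable M" for n unfolding c_def by simp
  have nn: "(\<integral>\<^sup>+\<omega>. ennreal (c n \<omega>) \<partial>M) = ennreal (\<integral>\<omega>. \<pi> (T n) \<omega> \<partial>M)" for n
    using nn_integral_eq_integral[OF cint(1)] cpos[of n] cint(2)[of n]
    by (metis (mono_tags, lifting) AE_mp less_imp_le AE_I2)
  have "(\<integral>\<^sup>+\<omega>. (\<Sum>n. ennreal (c n \<omega>)) \<partial>M) = (\<Sum>n. \<integral>\<^sup>+\<omega>. ennreal (c n \<omega>) \<partial>M)"
    by (rule nn_integral_suminf) simp
  also have "\<dots> \<le> (\<Sum>n. ennreal ((1/2)^n))"
    by (intro suminf_le summableI) (auto simp: nn T(2) less_imp_le)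
  also have "\<dots> = ennreal (\<Sum>n. (1/2)^n)"
    by (rule suminf_ennreal2) (auto simp: summable_geometric)
  finally have "(\<integral>\<^sup>+\<omega>. (\<Sum>n. ennreal (c n \<omega>)) \<partial>M) \<noteq> \<top>"
    using neq_top_trans ennreal_neq_top by blast
  then have fin: "AE \<omega> in M. (\<Sum>n. ennreal (c n \<omega>)) \<noteq> \<top>"
    using nn_integral_PInf_AE[of "\<lambda>\<omega>. (\<Sum>n. ennreal (c n \<omega>))" M] by (simp add: infinity_ennreal_def)
  have "AE \<omega> in M. (\<forall>n. 0 < c n \<omega>) \<and> (\<Sum>n. ennreal (c n \<omega>)) \<noteq> \<top> \<and> 0 < \<pi> t \<omega>"
    using fin pos[OF t0] cpos by (simp add: AE_all_countable)
  then have good: "AE \<omega> in M. \<exists>N. \<forall>n\<ge>N. 0 < exp_rate M F \<pi> t (T n) \<omega>"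
  proof (rule AE_mp, intro AE_I2 impI)
    fix \<omega> assume h: "(\<forall>n. 0 < c n \<omega>) \<and> (\<Sum>n. ennreal (c n \<omega>)) \<noteq> \<top> \<and> 0 < \<pi> t \<omega>"
    then have "summable (\<lambda>n. c n \<omega>)" by (intro summable_suminf_not_top) (auto simp: less_imp_le)
    then have "(\<lambda>n. c n \<omega>) \<longlonglongrightarrow> 0" by (rule summable_LIMSEQ_zero)
    then have "eventually (\<lambda>n. c n \<omega> < \<pi> t \<omega>) sequentially"
      using h by (intro order_tendstoD(2)) auto
    then obtain N where N: "\<And>n. n \<ge> N \<Longrightarrow> c n \<omega> < \<pi> t \<omega>"
      by (auto simp: eventually_sequentially)
    have "0 < exp_rate M F \<pi> t (T n) \<omega>" if "n \<ge> N" for n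
    proof -
      have b0: "0 < c n \<omega> / \<pi> t \<omega>" using h by simp
      have b1: "c n \<omega> / \<pi> t \<omega> < 1" using h N[OF that] by simp
      have "ln (c n \<omega> / \<pi> t \<omega>) < 0" using b0 b1 by simp
      then have "0 < - ln (c n \<omega> / \<pi> t \<omega>) / (T n - t)" using T0(2)[of n] by (simp add: divide_neg_pos)
      then show ?thesis unfolding exp_rate_def bond_price_def c_def by simp
    qed
    then show "\<exists>N. \<forall>n\<ge>N. 0 < exp_rate M F \<pi> t (T n) \<omega>" by blast
  qed
  have Rm: "exp_rate M F \<pi> t y \<in> borel_measurable (F t)" for y
    unfolding exp_rate_def bond_price_def using adapt by measurable
  define Sx where "Sx x = ess_sup_G M (F t) (exp_rate M F \<pi> t) {y\<in>{t<..}. x \<le> y}" for x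
  have Sx: "is_ess_sup M (F t) (exp_rate M F \<pi> t) {y\<in>{t<..}. x \<le> y} (Sx x)" for x
  proof -
    have "\<exists>Z. is_ess_sup M (F t) (exp_rate M F \<pi> t) {y\<in>{t<..}. x \<le> y} Z"
      by (rule ess_sup_exists[OF assms(1) S]) (rule Rm)
    then show ?thesis unfolding Sx_def ess_sup_G_def by (rule someI_ex)
  qed
  have Snn: "AE \<omega> in M. 0 \<le> Sx x \<omega>" for x
  proof -
    obtain K :: nat where K: "x \<le> real K" using real_arch_simple by blast
    have "AE \<omega> in M. \<forall>n. T n \<in> {y\<in>{t<..}. x \<le> y} \<longrightarrow> exp_rate M F \<pi> t (T n) \<omega> \<le> Sx x \<omega>"
      unfolding AE_all_countable
    proof
      fix n
      show "AE \<omega> in M. T n \<in> {y\<in>{t<..}. x \<le> y} \<longrightarrow> exp_rate M F \<pi> t (T n) \<omega> \<le> Sx x \<omega>"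
      proof (cases "T n \<in> {y\<in>{t<..}. x \<le> y}")
        case True
        have "AE \<omega> in M. exp_rate M F \<pi> t (T n) \<omega> \<le> Sx x \<omega>"
          by (rule is_ess_supD(2)[OF Sx[of x] True])
        then show ?thesis by eventually_elim blast
      next
        case False
        then show ?thesis by (intro AE_I2 impI) blast
      qed
    qed
    with good show ?thesis
    proof (eventually_elim)
      case (elim \<omega>)
      then obtain N where N: "\<And>n. n \<ge> N \<Longrightarrow> 0 < exp_rate M F \<pi> t (T n) \<omega>" by blast
      define n where "n = max N K"
      have "x \<le> T n" using T(1)[of n] K t0 unfolding n_def by auto
      then have "T n \<in> {y\<in>{t<..}. x \<le> y}" using T0(2)[of n] by auto
      then have "exp_rate M F \<pi> t (T n) \<omega> \<le> Sx x \<omega>" using elim by blast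
      moreover have "0 < exp_rate M F \<pi> t (T n) \<omega>" using N unfolding n_def by auto
      ultimately show ?case by simp
    qed
  qed
  have SxG: "Sx x \<in> borel_measurable (F t)" for x using is_ess_supD(1)[OF Sx[of x]] .
  have LR: "long_rate M F \<pi> t = ess_inf_G M (F t) Sx {t<..}"
    unfolding long_rate_def ess_limsup_def Sx_def ..
  have Z: "is_ess_inf M (F t) Sx {t<..} (long_rate M F \<pi> t)"
  proof -
    have "\<exists>Z. is_ess_inf M (F t) Sx {t<..} Z"
      by (rule ess_inf_exists[OF assms(1) S]) (rule SxG)
    then show ?thesis unfolding LR ess_inf_G_def by (rule someI_ex)
  qed
  have "(\<lambda>\<omega>. 0::ereal) \<in> borel_measurable (F t)" by simp
  then show ?thesis using is_ess_infD(3)[OF Z] Snn by blast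
qed

end
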